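(* Consider SALIQUANT. Then $\mathcal{SG}(0)=0$, and if $n$ is odd, then $\mathcal{SG}(n)=\frac{n-1}{2}$. Moreover, $\mathcal{SG}(n)<n/2$.
   Context: SALIQUANT is the impartial normal-play game on the nonnegative integers where from $n$ a player subtracts a nondivisor of $n$: $\mathrm{opt}(n)=\{n-k: 1\le k\le n,\ k\nmid n\}$; the player unable to move loses. $\mathcal{SG}$ denotes the Sprague-Grundy value (mex rule). *)

theory Defs
  imports Complex_Main
begin

definition opt :: "nat \<Rightarrow> nat set" where
  "opt n = {n - k | k. 1 \<le> k \<and> k \<le> n \<and> \<not> k dvd n}"

definition mex :: "nat set \<Rightarrow> nat" where
  "mex A = (LEAST m. m \<notin> A)"

function sg :: "nat \<Rightarrow> nat" where
  "sg n = mex (\<Union>m\<in>{m. m \<in> opt n \<and> m < n}. {sg m})"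
  by auto
termination
  by (relation "measure id") auto

text \<open>Every option is strictly smaller, so the guard m < n is vacuous.\<close>

end

theory Submission
  imports Defs
begin

declare sg.simps[simp del]

lemma mex_le: "b \<notin> A \<Longrightarrow> mex A \<le> b"
  unfolding mex_def by (rule Least_le)

lemma mex_eq: "b \<notin> A \<Longrightarrow> (\<forall>c<b. c \<in> A) \<Longrightarrow> mex A = b"
  unfolding mex_def by (rule Least_equality) (auto simp: not_less[symmetric])

lemma sg_eq: "sg n = mex (sg ` {m. m \<in> opt n \<and> m < n})"
proof -
  have "(\<Union>m\<in>{m. m \<in> opt n \<and> m < n}. {sg m}) = sg ` {m. m \<in> opt n \<and> m < n}" by auto
  then show ?thesis by (subst sg.simps) simp
qed

lemma opt_bounds: "m \<in> opt n \<Longrightarrow> 1 \<le> m \<and> m + 2 \<le> n"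
  unfolding opt_def
proof clarify
  fix k assume k: "1 \<le> k" "k \<le> n" "\<not> k dvd n"
  have "k \<noteq> n" using k by auto
  moreover have "k \<noteq> 1" using k by auto
  ultimately show "1 \<le> n - k \<and> n - k + 2 \<le> n" using k by auto
qed

lemma sg0: "sg 0 = 0"
proof -
  have "opt 0 = {}" unfolding opt_def by auto
  then show ?thesis by (subst sg_eq) (simp add: mex_def)
qed

lemma main: "(n \<ge> 1 \<longrightarrow> 2 * sg n < n) \<and> (odd n \<longrightarrow> sg n = (n - 1) div 2)"
proof (induction n rule: less_induct)
  case (less n)
  define S where "S = sg ` {m. m \<in> opt n \<and> m < n}"
  have sgn: "sg n = mex S" unfolding S_def by (rule sg_eq)
  define b where "b = (n - 1) div 2"
  have small: "v < b" if "v \<in> S" for v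
  proof -
    obtain m where m: "m \<in> opt n" "m < n" "v = sg m" using \<open>v \<in> S\<close> S_def by auto
    have "1 \<le> m" "m + 2 \<le> n" using opt_bounds[OF m(1)] by auto
    then have "2 * sg m < m" using less.IH[OF m(2)] by auto
    then show ?thesis using m \<open>m + 2 \<le> n\<close> unfolding b_def by auto
  qed
  have bS: "b \<notin> S" using small by blast
  have A: "n \<ge> 1 \<longrightarrow> 2 * sg n < n"
  proof
    assume "n \<ge> 1"
    have "sg n \<le> b" using sgn mex_le[OF bS] by simp
    then show "2 * sg n < n" using \<open>n \<ge> 1\<close> unfolding b_def by auto
  qed
  have B: "odd n \<longrightarrow> sg n = (n - 1) div 2"
  proof
    assume od: "odd n"
    have "\<forall>c<b. c \<in> S"
    proof (intro allI impI)
      fix c assume "c < b"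
      define k where "k = n - (2*c+1)"
      have "2 * c + 1 < n" using \<open>c < b\<close> unfolding b_def by auto
      have ev: "even k" using od \<open>2 * c + 1 < n\<close> unfolding k_def by auto
      have "\<not> k dvd n" using ev od by (metis dvd_trans even_iff_mod_2_eq_zero odd_iff_mod_2_eq_one) 
      moreover have "1 \<le> k" "k \<le> n" using \<open>2 * c + 1 < n\<close> unfolding k_def by auto
      ultimately have "2*c+1 \<in> opt n" unfolding opt_def using \<open>2 * c + 1 < n\<close> k_def
        by (auto intro!: exI[of _ k])
      moreover have "sg (2*c+1) = c" using less.IH[of "2*c+1"] \<open>2 * c + 1 < n\<close> by auto
      ultimately show "c \<in> S" unfolding S_def using \<open>2 * c + 1 < n\<close>
        by (metis (mono_tags, lifting) image_eqI mem_Collect_eq)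
    qed
    then show "sg n = (n - 1) div 2" using sgn mex_eq[OF bS] b_def by simp
  qed
  show ?case using A B by blast
qed

theorem mainTheorem5:
  shows "sg 0 = 0 \<and> (\<forall>n. odd n \<longrightarrow> sg n = (n - 1) div 2)
         \<and> (\<forall>n. n \<ge> 1 \<longrightarrow> real (sg n) < real n / 2)"
proof (intro conjI allI impI)
  show "sg 0 = 0" by (rule sg0)
next
  fix n :: nat assume "odd n" then show "sg n = (n - 1) div 2" using main by blast
next
  fix n :: nat assume "n \<ge> 1"
  then have "2 * sg n < n" using main by blast
  then have "real (2 * sg n) < real n" by linarith
  then show "real (sg n) < real n / 2" by simp
qed

end
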